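(* Let $V:\mathbb{R}\to\mathbb{R}$ be $C^2$, $I_1>0$, $\delta\in\mathbb{R}$, and consider on $\mathbb{R}^3\times\mathbb{R}^3\ni(\bm{a},\bm{l})$ the vector field \[ \dot{\bm{a}}=-\bm{a}\times\nabla_{\bm{l}}H,\qquad \dot{\bm{l}}=-\bm{a}\times\nabla_{\bm{a}}H-\bm{l}\times\nabla_{\bm{l}}H,\qquad H=\frac{1}{2I_1}\big(|\bm{l}|^2+\delta(\bm{a}\cdot\bm{l})^2\big)+V(a_z). \] For $s\in\{+1,-1\}$ and $m\in\mathbb{R}$, the point $\bm{a}=s\bm{e}_z$, $\bm{l}=m\bm{e}_z$ is an equilibrium, and the characteristic polynomial of the linearisation there is $\lambda^2P_+(\lambda)$, where \[ P_+(\lambda)=\lambda^4+\lambda^2(\kappa^2-2f)+f^2,\qquad \kappa=\frac{m}{I_1},\quad f=\frac{sV'(s)}{I_1} \] (independent of $\delta$). Consequently all roots of $P_+$ lie on the imaginary axis if and only if $\kappa^2\ge 4f$; if $\kappa^2<4f$, $P_+$ has roots with nonzero real part.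
   Context: $\bm{e}_z=(0,0,1)^t$, $a_z$ is the third component of $\bm{a}$, and $\times$ is the cross product in $\mathbb{R}^3$. *)

theory Defs
  imports "HOL-Analysis.Analysis"
begin

definition ez :: "real^3" where
  "ez = vector [0, 0, 1]"

definition Ham :: "real \<Rightarrow> real \<Rightarrow> (real \<Rightarrow> real) \<Rightarrow> real^3 \<Rightarrow> real^3 \<Rightarrow> real" where
  "Ham I1 \<delta> V a l = (1 / (2 * I1)) * ((norm l)^2 + \<delta> * (a \<bullet> l)^2) + V (a $ 3)"

text \<open>Partial gradients of Ham (written out; V' is the derivative of V).\<close>
definition grad_l :: "real \<Rightarrow> real \<Rightarrow> real^3 \<Rightarrow> real^3 \<Rightarrow> real^3" where
  "grad_l I1 \<delta> a l = (1 / I1) *\<^sub>R (l + (\<delta> * (a \<bullet> l)) *\<^sub>R a)"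

definition grad_a :: "real \<Rightarrow> real \<Rightarrow> (real \<Rightarrow> real) \<Rightarrow> real^3 \<Rightarrow> real^3 \<Rightarrow> real^3" where
  "grad_a I1 \<delta> V' a l = (\<delta> * (a \<bullet> l) / I1) *\<^sub>R l + V' (a $ 3) *\<^sub>R ez"

text \<open>State space R^3 x R^3 identified with R^6: z = (a_1,a_2,a_3,l_1,l_2,l_3).\<close>
definition apart :: "real^6 \<Rightarrow> real^3" where
  "apart z = vector [z $ 1, z $ 2, z $ 3]"

definition lpart :: "real^6 \<Rightarrow> real^3" where
  "lpart z = vector [z $ 4, z $ 5, z $ 6]"

definition pack :: "real^3 \<Rightarrow> real^3 \<Rightarrow> real^6" where
  "pack a l = vector [a $ 1, a $ 2, a $ 3, l $ 1, l $ 2, l $ 3]"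

definition field :: "real \<Rightarrow> real \<Rightarrow> (real \<Rightarrow> real) \<Rightarrow> real^6 \<Rightarrow> real^6" where
  "field I1 \<delta> V' z =
     (let a = apart z; l = lpart z in
      pack (- cross3 a (grad_l I1 \<delta> a l))
           (- cross3 a (grad_a I1 \<delta> V' a l) - cross3 l (grad_l I1 \<delta> a l)))"

definition Pplus :: "real \<Rightarrow> real \<Rightarrow> complex \<Rightarrow> complex" where
  "Pplus \<kappa> f w = w^4 + w^2 * of_real (\<kappa>^2 - 2 * f) + of_real (f^2)"

end

theory Submission
  imports Defs
begin


lemma exhaust_6:
  fixes x :: 6
  shows "x = 1 \<or> x = 2 \<or> x = 3 \<or> x = 4 \<or> x = 5 \<or> x = 6"
proof (induct x)
  case (of_int z)
  then have "z = 0 \<or> z = 1 \<or> z = 2 \<or> z = 3 \<or> z = 4 \<or> z = 5" by fastforce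
  then show ?case by auto
qed

lemma UNIV_6: "UNIV = {1, 2, 3, 4, 5, 6::6}"
  using exhaust_6 by auto

lemma vector_6 [simp]:
 "(vector [a,b,c,d,e,f] ::('a::zero)^6)$1 = a"
 "(vector [a,b,c,d,e,f] ::('a::zero)^6)$2 = b"
 "(vector [a,b,c,d,e,f] ::('a::zero)^6)$3 = c"
 "(vector [a,b,c,d,e,f] ::('a::zero)^6)$4 = d"
 "(vector [a,b,c,d,e,f] ::('a::zero)^6)$5 = e"
 "(vector [a,b,c,d,e,f] ::('a::zero)^6)$6 = f"
  unfolding vector_def by simp_all

lemma ez_nth[simp]: "ez $ 1 = 0" "ez $ 2 = 0" "ez $ 3 = 1"
  by (simp_all add: ez_def)

lemma field_nth:
  fixes z :: "real^6"
  defines "p \<equiv> z$1*z$4 + z$2*z$5 + z$3*z$6"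
  shows
  "field I1 \<delta> V' z $ 1 = - (z$2 * ((z$6 + \<delta>*p*z$3)/I1) - z$3 * ((z$5 + \<delta>*p*z$2)/I1))"
  "field I1 \<delta> V' z $ 2 = - (z$3 * ((z$4 + \<delta>*p*z$1)/I1) - z$1 * ((z$6 + \<delta>*p*z$3)/I1))"
  "field I1 \<delta> V' z $ 3 = - (z$1 * ((z$5 + \<delta>*p*z$2)/I1) - z$2 * ((z$4 + \<delta>*p*z$1)/I1))"
  "field I1 \<delta> V' z $ 4 = - (z$2 * (\<delta>*p*z$6/I1 + V'(z$3)) - z$3 * (\<delta>*p*z$5/I1))
        - (z$5 * ((z$6 + \<delta>*p*z$3)/I1) - z$6 * ((z$5 + \<delta>*p*z$2)/I1))"
  "field I1 \<delta> V' z $ 5 = - (z$3 * (\<delta>*p*z$4/I1) - z$1 * (\<delta>*p*z$6/I1 + V'(z$3)))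
        - (z$6 * ((z$4 + \<delta>*p*z$1)/I1) - z$4 * ((z$6 + \<delta>*p*z$3)/I1))"
  "field I1 \<delta> V' z $ 6 = - (z$1 * (\<delta>*p*z$5/I1) - z$2 * (\<delta>*p*z$4/I1))
        - (z$4 * ((z$5 + \<delta>*p*z$2)/I1) - z$5 * ((z$4 + \<delta>*p*z$1)/I1))"
  by (simp_all add: field_def pack_def apart_def lpart_def grad_l_def grad_a_def cross3_def
      inner_vec_def sum_3 p_def Let_def divide_simps; argo?)+



lemma det_restrict:
  fixes A :: "real^6^6"
  assumes r3: "\<And>j. j \<noteq> 3 \<Longrightarrow> A$3$j = 0" and r6: "\<And>j. j \<noteq> 6 \<Longrightarrow> A$6$j = 0"
  shows "det A = A$3$3 * A$6$6 * (\<Sum>p\<in>{p. p permutes {1,2,4,5::6}}.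
            of_int (sign p) * (A$1$(p 1) * A$2$(p 2) * A$4$(p 4) * A$5$(p 5)))"
proof -
  let ?S = "{1,2,4,5::6}"
  let ?g = "\<lambda>p. of_int (sign p) * (\<Prod>i\<in>UNIV. A$i$(p i))"
  have sub: "{p. p permutes ?S} \<subseteq> {p. p permutes UNIV}"
    by (auto intro: permutes_subset)
  have zero: "?g p = 0" if "p \<in> {p. p permutes UNIV} - {p. p permutes ?S}" for p
  proof -
    from that have pU: "p permutes UNIV" and npS: "\<not> p permutes ?S" by auto
    have "\<exists>x. x \<notin> ?S \<and> p x \<noteq> x"
      using npS pU unfolding permutes_def by blast
    then obtain x where x: "x \<notin> ?S" "p x \<noteq> x" by blast
    hence "x = 3 \<or> x = 6" using exhaust_6[of x] by auto
    hence "A$x$(p x) = 0" using x r3 r6 by auto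
    hence "(\<Prod>i\<in>UNIV. A$i$(p i)) = 0" by (metis UNIV_I finite prod_zero)
    thus ?thesis by simp
  qed
  have "det A = sum ?g {p. p permutes ?S}"
    unfolding det_def
    apply (rule sum.mono_neutral_right)
      apply (simp add: finite_permutations)
     apply (rule sub)
    using zero by blast
  also have "\<dots> = (\<Sum>p\<in>{p. p permutes ?S}. A$3$3 * A$6$6 *
            (of_int (sign p) * (A$1$(p 1) * A$2$(p 2) * A$4$(p 4) * A$5$(p 5))))"
  proof (rule sum.cong[OF refl])
    fix p assume "p \<in> {p. p permutes ?S}"
    hence "p 3 = 3" "p 6 = 6" unfolding permutes_def by auto
    thus "?g p = A$3$3 * A$6$6 *
            (of_int (sign p) * (A$1$(p 1) * A$2$(p 2) * A$4$(p 4) * A$5$(p 5)))"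
      unfolding UNIV_6 by (simp add: algebra_simps)
  qed
  finally show ?thesis by (simp add: sum_distrib_left)
qed

definition Jm :: "real \<Rightarrow> real \<Rightarrow> real \<Rightarrow> real^6^6" where
 "Jm k t v = (\<chi> i j. if i=1 \<and> j=2 then -k else if i=1 \<and> j=5 then t else
     if i=2 \<and> j=1 then k else if i=2 \<and> j=4 then -t else
     if i=4 \<and> j=2 then -v else if i=5 \<and> j=1 then v else 0)"

lemma det_Jm: "det (mat x - Jm k t v) = x^2 * (x^4 + x^2 * (k^2 - 2 * (t * v)) + (t * v)^2)"
proof -
  have f1: "finite {2::6,4,5}" "1 \<notin> {2::6,4,5}" by auto
  have f2: "finite {4::6,5}" "2 \<notin> {4::6,5}" by auto
  have f3: "finite {5::6}" "4 \<notin> {5::6}" by auto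
  show ?thesis
    apply (subst det_restrict)
    apply (simp add: Jm_def mat_def)
    apply (simp add: Jm_def mat_def)
    unfolding sum_over_permutations_insert[OF f1]
    unfolding sum_over_permutations_insert[OF f2]
    unfolding sum_over_permutations_insert[OF f3]
    unfolding permutes_sing
    apply (simp add: sign_swap_id permutation_swap_id sign_compose sign_id swap_id_eq permutation_compose
      Jm_def mat_def)
    by (simp add: algebra_simps power2_eq_square power4_eq_xxxx)
qed


lemma vn_deriv[derivative_intros]: "((\<lambda>x::real^'n. x$k) has_derivative (\<lambda>h. h$k)) F"
  by (rule bounded_linear_imp_has_derivative) (rule bounded_linear_vec_nth)

lemma comps:
  assumes V'_deriv: "\<And>x. (V' has_real_derivative V'' x) (at x)" and I: "I1 > 0" and s: "s * s = 1"
    and z0: "z0 = pack (s *\<^sub>R ez) (m *\<^sub>R ez)"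
  shows "((\<lambda>z. field I1 \<delta> V' z $ 1) has_derivative (\<lambda>h. - (m/I1) * h$2 + (s/I1) * h$5)) (at z0)"
   "((\<lambda>z. field I1 \<delta> V' z $ 2) has_derivative (\<lambda>h. (m/I1) * h$1 - (s/I1) * h$4)) (at z0)"
   "((\<lambda>z. field I1 \<delta> V' z $ 3) has_derivative (\<lambda>h. 0)) (at z0)"
   "((\<lambda>z. field I1 \<delta> V' z $ 4) has_derivative (\<lambda>h. - V' s * h$2)) (at z0)"
   "((\<lambda>z. field I1 \<delta> V' z $ 5) has_derivative (\<lambda>h. V' s * h$1)) (at z0)"
   "((\<lambda>z. field I1 \<delta> V' z $ 6) has_derivative (\<lambda>h. 0)) (at z0)"
proof -
  have z0v: "z0$1 = 0" "z0$2 = 0" "z0$3 = s" "z0$4 = 0" "z0$5 = 0" "z0$6 = m"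
    by (simp_all add: z0 pack_def)
  have ss: "\<And>y. s * (s * y) = y" using s by (metis mult.assoc mult_1)
  note D = DERIV_compose_FDERIV[OF V'_deriv]
  show "((\<lambda>z. field I1 \<delta> V' z $ 1) has_derivative (\<lambda>h. - (m/I1) * h$2 + (s/I1) * h$5)) (at z0)"
    unfolding field_nth
    using I by (auto intro!: derivative_eq_intros D simp: z0v fun_eq_iff field_simps ss)
  show "((\<lambda>z. field I1 \<delta> V' z $ 2) has_derivative (\<lambda>h. (m/I1) * h$1 - (s/I1) * h$4)) (at z0)"
    unfolding field_nth
    using I by (auto intro!: derivative_eq_intros D simp: z0v fun_eq_iff field_simps ss)
  show "((\<lambda>z. field I1 \<delta> V' z $ 3) has_derivative (\<lambda>h. 0)) (at z0)"
    unfolding field_nth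
    using I by (auto intro!: derivative_eq_intros D simp: z0v fun_eq_iff field_simps ss)
  show "((\<lambda>z. field I1 \<delta> V' z $ 4) has_derivative (\<lambda>h. - V' s * h$2)) (at z0)"
    unfolding field_nth
    using I by (auto intro!: derivative_eq_intros D simp: z0v fun_eq_iff field_simps ss)
  show "((\<lambda>z. field I1 \<delta> V' z $ 5) has_derivative (\<lambda>h. V' s * h$1)) (at z0)"
    unfolding field_nth
    using I by (auto intro!: derivative_eq_intros D simp: z0v fun_eq_iff field_simps ss)
  show "((\<lambda>z. field I1 \<delta> V' z $ 6) has_derivative (\<lambda>h. 0)) (at z0)"
    unfolding field_nth
    using I by (auto intro!: derivative_eq_intros D simp: z0v fun_eq_iff field_simps ss)
qed


lemma Pplus_factor: "Pplus k f w = (w^2 - of_real f + \<i> * of_real k * w) * (w^2 - of_real f - \<i> * of_real k * w)"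
  by (simp add: Pplus_def algebra_simps power2_eq_square power4_eq_xxxx)

lemma factor_root:
  assumes h: "w^2 - of_real f + \<i> * of_real e * w = 0" and e: "e^2 \<ge> 4 * f"
  shows "Re w = 0"
proof -
  obtain a b where w: "w = Complex a b" by (cases w)
  from arg_cong[OF h, of Re] have r: "a*a - b*b - f - e*b = 0" by (simp add: w power2_eq_square)
  from arg_cong[OF h, of Im] have i: "2*a*b + e*a = 0" by (simp add: w power2_eq_square)
  show ?thesis
  proof (rule ccontr)
    assume "Re w \<noteq> 0" hence a: "a \<noteq> 0" by (simp add: w)
    from i have "a * (2*b + e) = 0" by (simp add: algebra_simps)
    with a have b: "b = - e/2" by simp
    from r b have "a*a = f - e^2/4" by (simp add: power2_eq_square field_simps)
    with e have "a*a \<le> 0" by simp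
    moreover have "a*a > 0" using a by (auto simp add: zero_less_mult_iff linorder_neq_iff)
    ultimately show False by simp
  qed
qed

lemma roots_imag: assumes "k^2 \<ge> 4*f" "Pplus k f w = 0" shows "Re w = 0"
proof -
  from assms(2) have "(w^2 - of_real f + \<i> * of_real k * w) * (w^2 - of_real f - \<i> * of_real k * w) = 0"
    by (simp only: Pplus_factor)
  hence "w^2 - of_real f + \<i> * of_real k * w = 0 \<or> w^2 - of_real f - \<i> * of_real k * w = 0"
    by simp
  moreover have "w^2 - of_real f - \<i> * of_real k * w = w^2 - of_real f + \<i> * of_real (-k) * w"
    by simp
  ultimately have "w^2 - of_real f + \<i> * of_real k * w = 0 \<or>
      w^2 - of_real f + \<i> * of_real (-k) * w = 0" by argo
  moreover have "(-k)^2 \<ge> 4*f" using assms(1) by simp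
  ultimately show ?thesis using factor_root assms(1) by blast
qed

lemma root_real: assumes "k^2 < 4*f" shows "\<exists>w. Pplus k f w = 0 \<and> Re w \<noteq> 0"
proof -
  define r where "r = sqrt (4*f - k^2)"
  have r2: "r^2 = 4*f - k^2" using assms by (simp add: r_def)
  have rpos: "r > 0" using assms by (simp add: r_def)
  define w where "w = Complex (r/2) (-k/2)"
  have "w^2 - of_real f + \<i> * of_real k * w = 0"
    by (simp add: w_def complex_eq_iff power2_eq_square field_simps r2[unfolded power2_eq_square])
  hence "Pplus k f w = 0" unfolding Pplus_factor by simp
  moreover have "Re w \<noteq> 0" using rpos by (simp add: w_def)
  ultimately show ?thesis by blast
qed

lemma forall_6: "(\<forall>i::6. P i) \<longleftrightarrow> P 1 \<and> P 2 \<and> P 3 \<and> P 4 \<and> P 5 \<and> P 6"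
  by (metis exhaust_6)

theorem mainTheorem3:
  fixes V V' V'' :: "real \<Rightarrow> real" and I1 \<delta> s m :: real
  assumes V_deriv: "\<And>x. (V has_real_derivative V' x) (at x)"
    and V'_deriv: "\<And>x. (V' has_real_derivative V'' x) (at x)"
    and V''_cont: "continuous_on UNIV V''"
    and I1_pos: "I1 > 0"
    and s: "s = 1 \<or> s = -1"
  defines "z0 \<equiv> pack (s *\<^sub>R ez) (m *\<^sub>R ez)"
    and "\<kappa> \<equiv> m / I1"
    and "f \<equiv> s * V' s / I1"
  shows "field I1 \<delta> V' z0 = 0
    \<and> field I1 \<delta> V' differentiable (at z0)
    \<and> (\<forall>x::real. det (mat x - matrix (frechet_derivative (field I1 \<delta> V') (at z0)))
                  = x^2 * Re (Pplus \<kappa> f (of_real x)))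
    \<and> ((\<forall>w. Pplus \<kappa> f w = 0 \<longrightarrow> Re w = 0) \<longleftrightarrow> \<kappa>^2 \<ge> 4 * f)
    \<and> (\<kappa>^2 < 4 * f \<longrightarrow> (\<exists>w. Pplus \<kappa> f w = 0 \<and> Re w \<noteq> 0))"
proof -
  have ss: "s * s = 1" using s by auto
  have z0v: "z0$1 = 0" "z0$2 = 0" "z0$3 = s" "z0$4 = 0" "z0$5 = 0" "z0$6 = m"
    by (simp_all add: z0_def pack_def)
  define D where "D = (\<lambda>h::real^6. vector [- (m/I1) * h$2 + (s/I1) * h$5, (m/I1) * h$1 - (s/I1) * h$4,
      0, - V' s * h$2, V' s * h$1, 0] :: real^6)"
  note C = comps[OF V'_deriv I1_pos ss z0_def[THEN meta_eq_to_obj_eq]]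
  have comp: "((\<lambda>z. field I1 \<delta> V' z $ k) has_derivative (\<lambda>h. D h $ k)) (at z0)" for k
  proof -
    have "k = 1 \<or> k = 2 \<or> k = 3 \<or> k = 4 \<or> k = 5 \<or> k = 6" by (rule exhaust_6)
    thus ?thesis
      apply (elim disjE)
           apply (simp_all only:)
           apply (rule has_derivative_eq_rhs[OF C(1)], simp add: D_def fun_eq_iff algebra_simps)
          apply (rule has_derivative_eq_rhs[OF C(2)], simp add: D_def fun_eq_iff algebra_simps)
         apply (rule has_derivative_eq_rhs[OF C(3)], simp add: D_def fun_eq_iff algebra_simps)
        apply (rule has_derivative_eq_rhs[OF C(4)], simp add: D_def fun_eq_iff algebra_simps)
       apply (rule has_derivative_eq_rhs[OF C(5)], simp add: D_def fun_eq_iff algebra_simps)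
      apply (rule has_derivative_eq_rhs[OF C(6)], simp add: D_def fun_eq_iff algebra_simps)
      done
  qed
  have HD: "(field I1 \<delta> V' has_derivative D) (at z0)"
  proof -
    have "(field I1 \<delta> V' has_derivative D) (at z0 within UNIV)"
    proof (rule has_derivative_componentwise_within[THEN iffD2], rule ballI)
      fix i :: "real^6" assume "i \<in> Basis"
      then obtain k where i: "i = axis k 1" by (auto simp: Basis_vec_def)
      show "((\<lambda>x. field I1 \<delta> V' x \<bullet> i) has_derivative (\<lambda>x. D x \<bullet> i)) (at z0)"
        unfolding i cart_eq_inner_axis[symmetric] by (rule comp)
    qed
    thus ?thesis by simp
  qed
  have fd: "frechet_derivative (field I1 \<delta> V') (at z0) = D"
    using frechet_derivative_at[OF HD] by simp
  have mD: "matrix D = Jm (m/I1) (s/I1) (V' s)"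
    by (simp add: matrix_def Jm_def D_def vec_eq_iff forall_6 axis_def)
  have eq0: "field I1 \<delta> V' z0 = 0"
    by (simp add: vec_eq_iff forall_6 field_nth z0v)
  have dif: "field I1 \<delta> V' differentiable (at z0)"
    using HD by (rule differentiableI)
  have detf: "det (mat x - matrix (frechet_derivative (field I1 \<delta> V') (at z0)))
                  = x^2 * Re (Pplus \<kappa> f (of_real x))" for x
  proof -
    have "Re (Pplus \<kappa> f (of_real x)) = x^4 + x^2 * (\<kappa>^2 - 2 * f) + f^2"
      by (simp add: Pplus_def flip: of_real_power)
    moreover have "f = (s/I1) * V' s" by (simp add: f_def)
    ultimately show ?thesis
      unfolding fd mD det_Jm \<kappa>_def by simp
  qed
  have iff: "(\<forall>w. Pplus \<kappa> f w = 0 \<longrightarrow> Re w = 0) \<longleftrightarrow> \<kappa>^2 \<ge> 4 * f"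
  proof
    assume A: "\<forall>w. Pplus \<kappa> f w = 0 \<longrightarrow> Re w = 0"
    show "\<kappa>^2 \<ge> 4 * f"
    proof (rule ccontr)
      assume "\<not> \<kappa>^2 \<ge> 4 * f"
      hence "\<kappa>^2 < 4 * f" by simp
      from root_real[OF this] A show False by blast
    qed
  next
    assume "\<kappa>^2 \<ge> 4 * f"
    thus "\<forall>w. Pplus \<kappa> f w = 0 \<longrightarrow> Re w = 0" using roots_imag by blast
  qed
  have lt: "\<kappa>^2 < 4 * f \<longrightarrow> (\<exists>w. Pplus \<kappa> f w = 0 \<and> Re w \<noteq> 0)"
    using root_real by blast
  show ?thesis
    using eq0 dif detf iff lt by blast
qed

end
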